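(* Let the complex extension, $f(z)$, of $f(x)$ be entire. Then for all $n = 1, 2, 3, \dots$ and $0<\omega<a$, the following equality holds \begin{equation} \int_0^a \frac{f(x)}{(\omega + x)^n} \mathrm{d}x = \sum_{k=0}^{\infty} \binom{-n}{k} \omega^{ k}\, \mathrm{FP}\!\int_{0}^{a} \frac{f(x)}{x^{k + n}}\mathrm{d}x + \Delta_{\mathrm{sc}}^{(n)}(\omega) \end{equation} where \begin{equation} \Delta_{\mathrm{sc}}^{(1)}(\omega)= - f(-\omega) \ln\omega , \end{equation} \begin{eqnarray} \Delta_{\mathrm{sc}}^{(n)}(\omega)&=&-\;\frac{1}{\left(n-1\right)!}f^{(n-1)}\!\left(-\omega\right)\, \ln\omega \nonumber \\ && +\,\,\sum_{k=0}^{n-2}\frac{f^{\left(k\right)}\left(-\omega\right)}{k!\,\left(n-1-k\right) \; \omega^{n-k-1}}, \;\;\; n=2, 3, \dots \end{eqnarray}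
   Context: Here $0<a<\infty$ and $\mathrm{FP}\!\int_0^a g(x)x^{-p}\,\mathrm{d}x$ denotes the (Hadamard) finite part of a possibly divergent integral: for $0<\epsilon<a$ one writes $\int_\epsilon^a g(x)x^{-p}\,\mathrm{d}x = C_\epsilon + D_\epsilon$, where $C_\epsilon$ collects the terms having a finite limit as $\epsilon\to0$ and $D_\epsilon$ the terms diverging in that limit, and sets the finite part equal to $\lim_{\epsilon\to0}C_\epsilon$. When the integral converges, the finite part coincides with the ordinary integral. *)

theory Defs
  imports "HOL-Analysis.Analysis"
begin

text \<open>The integral over \<open>[\<epsilon>,a]\<close> is split as \<open>C_\<epsilon> + D_\<epsilon>\<close>, where the
  divergent part \<open>D_\<epsilon>\<close> is a combination of the divergent functions
  \<open>\<epsilon>^{-j}\<close> (\<open>j \<ge> 1\<close>) and \<open>ln \<epsilon>\<close>; the finite part is \<open>lim C_\<epsilon>\<close>.\<close>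

definition has_FP :: "(real \<Rightarrow> real) \<Rightarrow> nat \<Rightarrow> real \<Rightarrow> real \<Rightarrow> bool" where
  "has_FP g p a L \<longleftrightarrow>
     (\<exists>(c :: nat \<Rightarrow> real) (m :: nat).
        ((\<lambda>\<epsilon>. integral {\<epsilon>..a} (\<lambda>x. g x / x ^ p)
              - ((\<Sum>j=1..m. c j / \<epsilon> ^ j) + c 0 * ln \<epsilon>)) \<longlongrightarrow> L) (at_right 0))"

definition FP_integral :: "(real \<Rightarrow> real) \<Rightarrow> nat \<Rightarrow> real \<Rightarrow> real" where
  "FP_integral g p a = (THE L. has_FP g p a L)"

definition Delta_sc :: "(real \<Rightarrow> real) \<Rightarrow> nat \<Rightarrow> real \<Rightarrow> real" where
  "Delta_sc f n \<omega> =
    (if n = 1 then - f (-\<omega>) * ln \<omega>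
     else - (1 / fact (n - 1)) * (deriv ^^ (n - 1)) f (-\<omega>) * ln \<omega>
          + (\<Sum>k=0..n-2. (deriv ^^ k) f (-\<omega>)
                / (fact k * real (n - 1 - k) * \<omega> ^ (n - k - 1))))"

end

theory Submission
  imports Defs "HOL-Complex_Analysis.Complex_Analysis" "HOL-Real_Asymp.Real_Asymp"
begin



definition divf :: "(real \<Rightarrow> real) \<Rightarrow> bool" where
  "divf K \<longleftrightarrow> (\<exists>(c::nat\<Rightarrow>real) m. K = (\<lambda>\<epsilon>. (\<Sum>j=1..m. c j / \<epsilon> ^ j) + c 0 * ln \<epsilon>))"

lemma has_FP_divf:
  "has_FP g p a L \<longleftrightarrow> (\<exists>K. divf K \<and> ((\<lambda>\<epsilon>. integral {\<epsilon>..a} (\<lambda>x. g x / x ^ p) - K \<epsilon>) \<longlongrightarrow> L) (at_right 0))"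
  unfolding has_FP_def divf_def by auto

lemma divf_zero: "divf (\<lambda>_. 0)"
  unfolding divf_def by (rule exI[of _ "\<lambda>_. 0"], rule exI[of _ 0]) simp

lemma divf_ln: "divf (\<lambda>\<epsilon>. ln \<epsilon>)"
  unfolding divf_def by (rule exI[of _ "\<lambda>j. if j = 0 then 1 else 0"], rule exI[of _ 0]) simp

lemma divf_pow: "i \<ge> 1 \<Longrightarrow> divf (\<lambda>\<epsilon>. 1 / \<epsilon> ^ i)"
  unfolding divf_def
proof (rule exI[of _ "\<lambda>j. if j = i then 1 else 0"], rule exI[of _ i])
  assume "i \<ge> 1"
  show "(\<lambda>\<epsilon>::real. 1 / \<epsilon> ^ i) =
    (\<lambda>\<epsilon>. (\<Sum>j = 1..i. (if j = i then 1 else 0) / \<epsilon> ^ j) + (if (0::nat) = i then 1 else 0) * ln \<epsilon>)"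
  proof
    fix e :: real
    have "(\<Sum>j = 1..i. (if j = i then 1 else 0) / e ^ j) = (\<Sum>j = 1..i. if j = i then 1 / e ^ j else 0)"
      by (rule sum.cong) auto
    also have "\<dots> = 1 / e ^ i" using \<open>i \<ge> 1\<close> by simp
    finally show "1 / e ^ i = (\<Sum>j = 1..i. (if j = i then 1 else 0) / e ^ j) + (if (0::nat) = i then 1 else 0) * ln e"
      using \<open>i \<ge> 1\<close> by simp
  qed
qed

lemma divf_scale: "divf K \<Longrightarrow> divf (\<lambda>\<epsilon>. \<alpha> * K \<epsilon>)"
  unfolding divf_def
proof (elim exE)
  fix c m assume "K = (\<lambda>\<epsilon>. (\<Sum>j = 1..m. c j / \<epsilon> ^ j) + c 0 * ln \<epsilon>)"
  then show "\<exists>c m. (\<lambda>\<epsilon>. \<alpha> * K \<epsilon>) = (\<lambda>\<epsilon>. (\<Sum>j = 1..m. c j / \<epsilon> ^ j) + c 0 * ln \<epsilon>)"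
    by (intro exI[of _ "\<lambda>j. \<alpha> * c j"] exI[of _ m]) (auto simp: sum_distrib_left algebra_simps)
qed

lemma sum_ext_zero:
  fixes c :: "nat \<Rightarrow> real"
  assumes "m1 \<le> m"
  shows "(\<Sum>j=1..m. (if j \<le> m1 then c j else 0) / e ^ j) = (\<Sum>j=1..m1. c j / e ^ j)"
proof -
  have "(\<Sum>j=1..m. (if j \<le> m1 then c j else 0) / e ^ j) = (\<Sum>j=1..m1. (if j \<le> m1 then c j else 0) / e ^ j)"
    using assms by (intro sum.mono_neutral_right) auto
  also have "\<dots> = (\<Sum>j=1..m1. c j / e ^ j)" by (intro sum.cong) auto
  finally show ?thesis .
qed

lemma divf_add: "divf K1 \<Longrightarrow> divf K2 \<Longrightarrow> divf (\<lambda>\<epsilon>. K1 \<epsilon> + K2 \<epsilon>)"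
  unfolding divf_def
proof (elim exE)
  fix c1 m1 c2 m2
  assume 1: "K1 = (\<lambda>\<epsilon>. (\<Sum>j = 1..m1. c1 j / \<epsilon> ^ j) + c1 0 * ln \<epsilon>)"
    and 2: "K2 = (\<lambda>\<epsilon>. (\<Sum>j = 1..m2. c2 j / \<epsilon> ^ j) + c2 0 * ln \<epsilon>)"
  define c where "c = (\<lambda>j. (if j \<le> m1 then c1 j else 0) + (if j \<le> m2 then c2 j else 0))"
  have "(\<lambda>\<epsilon>. K1 \<epsilon> + K2 \<epsilon>) = (\<lambda>\<epsilon>. (\<Sum>j = 1..max m1 m2. c j / \<epsilon> ^ j) + c 0 * ln \<epsilon>)"
  proof
    fix e
    have "(\<Sum>j = 1..max m1 m2. c j / e ^ j) = (\<Sum>j=1..max m1 m2. (if j \<le> m1 then c1 j else 0) / e ^ j)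
        + (\<Sum>j=1..max m1 m2. (if j \<le> m2 then c2 j else 0) / e ^ j)"
      unfolding c_def by (simp add: add_divide_distrib sum.distrib)
    also have "\<dots> = (\<Sum>j=1..m1. c1 j / e ^ j) + (\<Sum>j=1..m2. c2 j / e ^ j)"
      using sum_ext_zero[of m1 "max m1 m2" c1 e] sum_ext_zero[of m2 "max m1 m2" c2 e] by simp
    finally show "K1 e + K2 e = (\<Sum>j = 1..max m1 m2. c j / e ^ j) + c 0 * ln e"
      unfolding 1 2 c_def by (simp add: algebra_simps)
  qed
  then show "\<exists>c m. (\<lambda>\<epsilon>. K1 \<epsilon> + K2 \<epsilon>) = (\<lambda>\<epsilon>. (\<Sum>j = 1..m. c j / \<epsilon> ^ j) + c 0 * ln \<epsilon>)" by blast
qed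

lemma divf_diff: "divf K1 \<Longrightarrow> divf K2 \<Longrightarrow> divf (\<lambda>\<epsilon>. K1 \<epsilon> - K2 \<epsilon>)"
  using divf_add[of K1 "\<lambda>\<epsilon>. (-1) * K2 \<epsilon>"] divf_scale[of K2 "-1"] by simp

lemma divf_sum: "(\<And>i. i \<in> S \<Longrightarrow> divf (K i)) \<Longrightarrow> divf (\<lambda>\<epsilon>. \<Sum>i\<in>S. K i \<epsilon>)"
proof (induction S rule: infinite_finite_induct)
  case (infinite A) then show ?case by (simp add: divf_zero)
next
  case empty then show ?case by (simp add: divf_zero)
next
  case (insert x F) then show ?case by (simp add: divf_add)
qed

lemma ln_tendsto_imp:
  assumes "((\<lambda>\<epsilon>. c0 * ln \<epsilon>) \<longlongrightarrow> L) (at_right (0::real))"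
  shows "c0 = 0 \<and> L = 0"
proof (cases "c0 = 0")
  case True
  then have "((\<lambda>\<epsilon>::real. 0::real) \<longlongrightarrow> L) (at_right 0)" using assms by simp
  note lim0 = this
  have "L = 0" using tendsto_unique[OF _ lim0 tendsto_const] by simp
  then show ?thesis using True by simp
next
  case False
  have "((\<lambda>\<epsilon>. (c0 * ln \<epsilon>) / c0) \<longlongrightarrow> L / c0) (at_right (0::real))"
    using assms by (intro tendsto_divide) (auto simp: False)
  then have "((\<lambda>\<epsilon>. ln \<epsilon>) \<longlongrightarrow> L / c0) (at_right (0::real))" using False by simp
  moreover have "filterlim (\<lambda>\<epsilon>::real. ln \<epsilon>) at_infinity (at_right 0)"
    using ln_at_0 filterlim_at_bot_imp_at_infinity by blast
  ultimately have False using not_tendsto_and_filterlim_at_infinity[of "at_right (0::real)"] by auto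
  then show ?thesis ..
qed

lemma divf_lim_aux:
  "((\<lambda>\<epsilon>. (\<Sum>j=1..m. c j / \<epsilon> ^ j) + c 0 * ln \<epsilon>) \<longlongrightarrow> L) (at_right (0::real))
   \<Longrightarrow> L = 0 \<and> (\<forall>j\<in>{1..m}. c j = 0) \<and> c 0 = 0"
proof (induction m arbitrary: c L)
  case 0
  then show ?case using ln_tendsto_imp by simp
next
  case (Suc m)
  have eq: "\<epsilon> * ((\<Sum>j=1..Suc m. c j / \<epsilon> ^ j) + c 0 * ln \<epsilon>)
      = c 1 + ((\<Sum>j=1..m. c (Suc j) / \<epsilon> ^ j) + 0 * ln \<epsilon>) + c 0 * (\<epsilon> * ln \<epsilon>)"
    if "\<epsilon> > 0" for \<epsilon> :: real
  proof -
    have "(\<Sum>j=1..Suc m. c j / \<epsilon> ^ j) = c 1 / \<epsilon> + (\<Sum>j=Suc 1..Suc m. c j / \<epsilon> ^ j)"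
      by (simp add: sum.atLeast_Suc_atMost)
    also have "(\<Sum>j=Suc 1..Suc m. c j / \<epsilon> ^ j) = (\<Sum>j=1..m. c (Suc j) / \<epsilon> ^ Suc j)"
      by (rule sum.shift_bounds_cl_Suc_ivl)
    finally have "\<epsilon> * (\<Sum>j=1..Suc m. c j / \<epsilon> ^ j) = c 1 + (\<Sum>j=1..m. \<epsilon> * (c (Suc j) / \<epsilon> ^ Suc j))"
      using that by (simp add: algebra_simps sum_distrib_left)
    also have "(\<Sum>j=1..m. \<epsilon> * (c (Suc j) / \<epsilon> ^ Suc j)) = (\<Sum>j=1..m. c (Suc j) / \<epsilon> ^ j)"
      using that by (intro sum.cong) (auto simp: field_simps)
    finally show ?thesis by (simp add: algebra_simps)
  qed
  have l1: "((\<lambda>\<epsilon>. \<epsilon> * ((\<Sum>j=1..Suc m. c j / \<epsilon> ^ j) + c 0 * ln \<epsilon>)) \<longlongrightarrow> 0 * L) (at_right (0::real))"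
    by (intro tendsto_mult Suc.prems) (auto intro: tendsto_eq_intros)
  have l2: "((\<lambda>\<epsilon>::real. \<epsilon> * ln \<epsilon>) \<longlongrightarrow> 0) (at_right 0)" by real_asymp
  have "((\<lambda>\<epsilon>. \<epsilon> * ((\<Sum>j=1..Suc m. c j / \<epsilon> ^ j) + c 0 * ln \<epsilon>) - c 1 - c 0 * (\<epsilon> * ln \<epsilon>))
        \<longlongrightarrow> 0 * L - c 1 - c 0 * 0) (at_right (0::real))"
    by (intro tendsto_diff l1 tendsto_mult l2 tendsto_const)
  moreover have "eventually (\<lambda>\<epsilon>. \<epsilon> * ((\<Sum>j=1..Suc m. c j / \<epsilon> ^ j) + c 0 * ln \<epsilon>) - c 1 - c 0 * (\<epsilon> * ln \<epsilon>)
        = (\<Sum>j=1..m. (\<lambda>j. if j = 0 then 0 else c (Suc j)) j / \<epsilon> ^ j) + (\<lambda>j. if j = 0 then 0 else c (Suc j)) 0 * ln \<epsilon>) (at_right (0::real))"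
    using eventually_at_right_less[of 0]
  proof eventually_elim
    case (elim e)
    have sc: "(\<Sum>j=1..m. (\<lambda>j. if j = 0 then 0 else c (Suc j)) j / e ^ j) = (\<Sum>j=1..m. c (Suc j) / e ^ j)"
      by (intro sum.cong) auto
    show ?case using eq[OF elim] unfolding sc by simp
  qed
  ultimately have "((\<lambda>\<epsilon>. (\<Sum>j=1..m. (\<lambda>j. if j = 0 then 0 else c (Suc j)) j / \<epsilon> ^ j) + (\<lambda>j. if j = 0 then 0 else c (Suc j)) 0 * ln \<epsilon>)
        \<longlongrightarrow> 0 * L - c 1 - c 0 * 0) (at_right (0::real))"
    using tendsto_cong by force
  from Suc.IH[OF this] have c1: "c 1 = 0" and cs: "\<forall>j\<in>{1..m}. c (Suc j) = 0" by auto
  have call: "\<forall>j\<in>{1..Suc m}. c j = 0"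
  proof
    fix j assume j: "j \<in> {1..Suc m}"
    show "c j = 0"
    proof (cases "j = 1")
      case True then show ?thesis using c1 by simp
    next
      case False
      then have "j = Suc (j - 1)" "j - 1 \<in> {1..m}" using j by auto
      then show ?thesis using cs by metis
    qed
  qed
  then have "(\<Sum>j=1..Suc m. c j / \<epsilon> ^ j) = 0" for \<epsilon> :: real by simp
  then have "((\<lambda>\<epsilon>. c 0 * ln \<epsilon>) \<longlongrightarrow> L) (at_right (0::real))" using Suc.prems by simp
  from ln_tendsto_imp[OF this] call show ?case by simp
qed

lemma divf_lim: "divf K \<Longrightarrow> (K \<longlongrightarrow> L) (at_right (0::real)) \<Longrightarrow> L = 0"
  unfolding divf_def using divf_lim_aux by blast

lemma has_FP_unique: "has_FP g p a L1 \<Longrightarrow> has_FP g p a L2 \<Longrightarrow> L1 = L2"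
proof -
  assume "has_FP g p a L1" "has_FP g p a L2"
  then obtain K1 K2 where K: "divf K1" "divf K2"
    and l1: "((\<lambda>\<epsilon>. integral {\<epsilon>..a} (\<lambda>x. g x / x ^ p) - K1 \<epsilon>) \<longlongrightarrow> L1) (at_right 0)"
    and l2: "((\<lambda>\<epsilon>. integral {\<epsilon>..a} (\<lambda>x. g x / x ^ p) - K2 \<epsilon>) \<longlongrightarrow> L2) (at_right 0)"
    unfolding has_FP_divf by blast
  have "((\<lambda>\<epsilon>. (integral {\<epsilon>..a} (\<lambda>x. g x / x ^ p) - K1 \<epsilon>) - (integral {\<epsilon>..a} (\<lambda>x. g x / x ^ p) - K2 \<epsilon>))
     \<longlongrightarrow> L1 - L2) (at_right 0)" by (intro tendsto_diff l1 l2)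
  then have "((\<lambda>\<epsilon>. K2 \<epsilon> - K1 \<epsilon>) \<longlongrightarrow> L1 - L2) (at_right 0)" by simp
  from divf_lim[OF divf_diff[OF K(2) K(1)] this] show ?thesis by simp
qed

lemma FP_integral_eq: "has_FP g p a L \<Longrightarrow> FP_integral g p a = L"
  unfolding FP_integral_def using has_FP_unique by blast




definition Gp :: "(nat \<Rightarrow> real) \<Rightarrow> nat \<Rightarrow> real \<Rightarrow> real" where
  "Gp c p x = (\<Sum>m. c (m + p) * x ^ m)"

definition dd :: "(nat \<Rightarrow> real) \<Rightarrow> nat \<Rightarrow> nat \<Rightarrow> real" where
  "dd c p m = (if m = 0 then 0 else c (m - 1 + p) / real m)"

definition Pp :: "(nat \<Rightarrow> real) \<Rightarrow> nat \<Rightarrow> real \<Rightarrow> real" where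
  "Pp c p x = (\<Sum>m. dd c p m * x ^ m)"

definition FPval :: "(nat \<Rightarrow> real) \<Rightarrow> nat \<Rightarrow> real \<Rightarrow> real" where
  "FPval c p a = (\<Sum>i=1..p. c (p - i) * (if i = 1 then ln a else - 1 / (real (i - 1) * a ^ (i - 1)))) + Pp c p a"

locale pser =
  fixes c :: "nat \<Rightarrow> real" and g :: "real \<Rightarrow> real"
  assumes ps: "\<And>x. (\<lambda>j. c j * x ^ j) sums g x"
begin

lemma abs_summable: "summable (\<lambda>j. \<bar>c j\<bar> * r ^ j)" if "r \<ge> 0"
proof -
  have "summable (\<lambda>j. norm (c j * r ^ j))"
    by (rule powser_insidea[OF sums_summable[OF ps[of "r + 1"]]]) (use that in auto)
  then show ?thesis using that by (simp add: abs_mult)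
qed

lemma summable_shift: "summable (\<lambda>m. c (m + p) * x ^ m)"
proof -
  define r where "r = max 1 \<bar>x\<bar>"
  have r: "r \<ge> 1" "\<bar>x\<bar> \<le> r" unfolding r_def by auto
  have "summable (\<lambda>m. \<bar>c (m + p)\<bar> * r ^ (m + p))"
    using abs_summable[of r] r summable_iff_shift[of "\<lambda>j. \<bar>c j\<bar> * r ^ j" p] by simp
  then show ?thesis
  proof (rule summable_comparison_test'[where N=0])
    fix m :: nat
    have "\<bar>x\<bar> ^ m \<le> r ^ m" using r by (intro power_mono) auto
    also have "\<dots> \<le> r ^ (m + p)" using r by (intro power_increasing) auto
    finally show "norm (c (m + p) * x ^ m) \<le> \<bar>c (m + p)\<bar> * r ^ (m + p)"
      by (simp add: abs_mult power_abs mult_left_mono)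
  qed
qed

lemma summable_dd: "summable (\<lambda>m. dd c p m * x ^ m)"
proof -
  have "summable (\<lambda>m. norm (c (m + p) * x ^ m))"
  proof -
    have "summable (\<lambda>m. c (m + p) * (\<bar>x\<bar> + 1) ^ m)" by (rule summable_shift)
    from powser_insidea[OF this, of x] show ?thesis by simp
  qed
  then have "summable (\<lambda>m. \<bar>x\<bar> * norm (c (m + p) * x ^ m))" by (rule summable_mult)
  then have "summable (\<lambda>m. dd c p (Suc m) * x ^ (Suc m))"
  proof (rule summable_comparison_test'[where N=0])
    fix m :: nat
    have "norm (dd c p (Suc m) * x ^ Suc m) = \<bar>x\<bar> * \<bar>c (m + p)\<bar> * \<bar>x\<bar> ^ m / real (Suc m)"
      by (simp add: dd_def abs_mult power_abs)
    also have "\<dots> \<le> \<bar>x\<bar> * \<bar>c (m + p)\<bar> * \<bar>x\<bar> ^ m"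
      apply (subst pos_divide_le_eq, simp)
      using mult_left_mono[of 1 "real (Suc m)" "\<bar>x\<bar> * \<bar>c (m + p)\<bar> * \<bar>x\<bar> ^ m"] by simp
    finally show "norm (dd c p (Suc m) * x ^ Suc m) \<le> \<bar>x\<bar> * norm (c (m + p) * x ^ m)"
      by (simp add: abs_mult power_abs mult.assoc)
  qed
  then show ?thesis using summable_Suc_iff by blast
qed

lemma diffs_dd: "diffs (dd c p) = (\<lambda>m. c (m + p))"
  by (auto simp: diffs_def dd_def)

lemma Pp_deriv: "(Pp c p has_real_derivative Gp c p x) (at x)"
proof -
  have "((\<lambda>x. \<Sum>n. dd c p n * x ^ n) has_field_derivative (\<Sum>n. diffs (dd c p) n * x ^ n)) (at x)"
    by (rule termdiffs_strong_converges_everywhere) (rule summable_dd)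
  then show ?thesis unfolding Pp_def[abs_def] Gp_def diffs_dd by simp
qed

lemma Pp_0: "Pp c p 0 = 0"
proof -
  have "(\<lambda>m. dd c p m * 0 ^ m) = (\<lambda>_. 0)" by (auto simp: dd_def fun_eq_iff)
  then show ?thesis unfolding Pp_def by simp
qed

lemma Pp_lim: "((\<lambda>\<epsilon>. Pp c p \<epsilon>) \<longlongrightarrow> 0) (at_right 0)"
proof -
  have "isCont (Pp c p) 0" using Pp_deriv DERIV_isCont by blast
  then have "(Pp c p \<longlongrightarrow> 0) (at 0)" using Pp_0 isCont_def by metis
  then show ?thesis by (simp add: filterlim_at_split)
qed

lemma Gp_cont: "continuous_on S (Gp c p)"
proof -
  have "((\<lambda>x. \<Sum>n. c (n + p) * x ^ n) has_field_derivative (\<Sum>n. diffs (\<lambda>m. c (m+p)) n * x ^ n)) (at x)" for x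
    by (rule termdiffs_strong_converges_everywhere) (rule summable_shift)
  then have "isCont (Gp c p) x" for x unfolding Gp_def[abs_def] using DERIV_isCont by blast
  then show ?thesis by (simp add: continuous_at_imp_continuous_on)
qed

lemma g_decomp: "g x = (\<Sum>j<p. c j * x ^ j) + x ^ p * Gp c p x"
proof -
  have "(\<lambda>i. c (i + p) * x ^ (i + p)) sums (g x - (\<Sum>i<p. c i * x ^ i))"
    using sums_iff_shift[of "\<lambda>j. c j * x ^ j" p] ps[of x] by simp
  moreover have "(\<lambda>i. c (i + p) * x ^ (i + p)) sums (x ^ p * Gp c p x)"
  proof -
    have "(\<lambda>i. x ^ p * (c (i + p) * x ^ i)) sums (x ^ p * Gp c p x)"
      unfolding Gp_def by (intro sums_mult summable_sums summable_shift)
    then show ?thesis by (simp add: power_add algebra_simps)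
  qed
  ultimately show ?thesis using sums_unique2 by fastforce
qed

lemma g_cont: "continuous_on S g"
proof -
  have "g = (\<lambda>x. (\<Sum>j<0. c j * x ^ j) + x ^ 0 * Gp c 0 x)" using g_decomp by blast
  then show ?thesis using Gp_cont by simp
qed

end




definition Ival :: "real \<Rightarrow> real \<Rightarrow> nat \<Rightarrow> real" where
  "Ival a e i = (if i = 1 then ln a - ln e else 1 / (real (i - 1) * e ^ (i - 1)) - 1 / (real (i - 1) * a ^ (i - 1)))"

lemma int_inv_pow:
  assumes "0 < e" "e \<le> a" "i \<ge> 1"
  shows "((\<lambda>x. 1 / x ^ i) has_integral Ival a e i) {e..a}"
proof (cases "i = 1")
  case True
  have "((\<lambda>x. 1 / x ^ i) has_integral (ln a - ln e)) {e..a}"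
  proof (rule fundamental_theorem_of_calculus)
    fix x assume x: "x \<in> {e..a}"
    then have "x > 0" using assms by auto
    then have "(ln has_real_derivative 1 / x ^ i) (at x)" using True by (auto intro!: derivative_eq_intros)
    then show "(ln has_vector_derivative 1 / x ^ i) (at x within {e..a})"
      by (simp add: has_real_derivative_iff_has_vector_derivative has_vector_derivative_at_within)
  qed (use assms in auto)
  then show ?thesis using True by (simp add: Ival_def)
next
  case False
  define k where "k = i - 2"
  have k: "i = Suc (Suc k)" using assms False unfolding k_def by arith
  have "((\<lambda>x. 1 / x ^ i) has_integral ((- 1 / (real (Suc k) * a ^ Suc k)) - (- 1 / (real (Suc k) * e ^ Suc k)))) {e..a}"
  proof (rule fundamental_theorem_of_calculus)
    fix x assume x: "x \<in> {e..a}"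
    then have "x > 0" using assms by auto
    have "((\<lambda>x. - 1 / (real (Suc k) * x ^ Suc k)) has_real_derivative 1 / x ^ i) (at x)"
      unfolding k
      apply (rule derivative_eq_intros refl)+
      subgoal using \<open>x > 0\<close> by simp
      using \<open>x > 0\<close> apply (simp add: divide_simps)
      done
    then show "((\<lambda>x. - 1 / (real (Suc k) * x ^ Suc k)) has_vector_derivative 1 / x ^ i) (at x within {e..a})"
      by (simp add: has_real_derivative_iff_has_vector_derivative has_vector_derivative_at_within)
  qed (use assms in auto)
  then show ?thesis using k by (simp add: Ival_def)
qed

lemma sum_div_reindex:
  fixes x :: real
  assumes "x \<noteq> 0"
  shows "(\<Sum>j<p. c j * x ^ j) / x ^ p = (\<Sum>i=1..p. c (p - i) * (1 / x ^ i))"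
proof -
  have "(\<Sum>j<p. c j * x ^ j) / x ^ p = (\<Sum>j<p. c j * (1 / x ^ (p - j)))"
    unfolding sum_divide_distrib
  proof (intro sum.cong refl)
    fix j assume "j \<in> {..<p}"
    then have "x ^ p = x ^ j * x ^ (p - j)" by (simp add: power_add[symmetric])
    then show "c j * x ^ j / x ^ p = c j * (1 / x ^ (p - j))" using assms by simp
  qed
  also have "\<dots> = (\<Sum>i=1..p. c (p - i) * (1 / x ^ i))"
    by (rule sum.reindex_bij_witness[where i="\<lambda>i. p - i" and j="\<lambda>j. p - j"]) auto
  finally show ?thesis .
qed

context pser begin

lemma integral_eps:
  assumes "0 < e" "e \<le> a"
  shows "integral {e..a} (\<lambda>x. g x / x ^ p) = (\<Sum>i=1..p. c (p - i) * Ival a e i) + (Pp c p a - Pp c p e)"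
proof -
  have hi: "((\<lambda>x. (\<Sum>i=1..p. c (p - i) * (1 / x ^ i)) + Gp c p x) has_integral
        ((\<Sum>i=1..p. c (p - i) * Ival a e i) + (Pp c p a - Pp c p e))) {e..a}"
  proof (rule has_integral_add)
    show "((\<lambda>x. \<Sum>i = 1..p. c (p - i) * (1 / x ^ i)) has_integral (\<Sum>i = 1..p. c (p - i) * Ival a e i)) {e..a}"
      by (intro has_integral_sum has_integral_mult_right int_inv_pow) (use assms in auto)
    show "(Gp c p has_integral Pp c p a - Pp c p e) {e..a}"
    proof (rule fundamental_theorem_of_calculus)
      fix x assume "x \<in> {e..a}"
      show "(Pp c p has_vector_derivative Gp c p x) (at x within {e..a})"
        using Pp_deriv by (simp add: has_real_derivative_iff_has_vector_derivative has_vector_derivative_at_within)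
    qed (use assms in auto)
  qed
  have eqf: "(\<Sum>i=1..p. c (p - i) * (1 / x ^ i)) + Gp c p x = g x / x ^ p" if "x \<in> {e..a}" for x
  proof -
    have "x \<noteq> 0" using that assms by auto
    then show ?thesis using g_decomp[of x p] sum_div_reindex[where x=x and p=p and c=c] by (simp add: add_divide_distrib)
  qed
  have "((\<lambda>x. g x / x ^ p) has_integral ((\<Sum>i=1..p. c (p - i) * Ival a e i) + (Pp c p a - Pp c p e))) {e..a}"
    by (rule has_integral_eq[OF eqf hi])
  then show ?thesis by (rule integral_unique)
qed

lemma integral_0a:
  assumes "0 \<le> a"
  shows "integral {0..a} g = Pp c 0 a"
proof -
  have "(Gp c 0 has_integral Pp c 0 a - Pp c 0 0) {0..a}"
  proof (rule fundamental_theorem_of_calculus)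
    fix x assume "x \<in> {0..a}"
    show "(Pp c 0 has_vector_derivative Gp c 0 x) (at x within {0..a})"
      using Pp_deriv by (simp add: has_real_derivative_iff_has_vector_derivative has_vector_derivative_at_within)
  qed (use assms in auto)
  moreover have "Gp c 0 = g"
  proof
    fix x show "Gp c 0 x = g x" using g_decomp[of x 0] by simp
  qed
  ultimately have "(g has_integral Pp c 0 a) {0..a}" by (simp add: Pp_0)
  then show ?thesis by (rule integral_unique)
qed

lemma FP_has:
  assumes "0 < a"
  shows "has_FP g p a (FPval c p a)"
  unfolding has_FP_divf
proof (intro exI conjI)
  define K where "K = (\<lambda>e. \<Sum>i=1..p. c (p - i) * (if i = 1 then - ln e else 1 / (real (i - 1) * e ^ (i - 1))))"
  show "divf K" unfolding K_def
  proof (intro divf_sum divf_scale)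
    fix i assume i: "i \<in> {1..p}"
    show "divf (\<lambda>e. if i = 1 then - ln e else 1 / (real (i - 1) * e ^ (i - 1)))"
    proof (cases "i = 1")
      case True then show ?thesis using divf_scale[OF divf_ln, of "-1"] by simp
    next
      case False
      then have "i - 1 \<ge> 1" using i by auto
      from divf_scale[OF divf_pow[OF this], of "1 / real (i - 1)"] False show ?thesis by simp
    qed
  qed
  have ev: "eventually (\<lambda>e. integral {e..a} (\<lambda>x. g x / x ^ p) - K e =
      (\<Sum>i=1..p. c (p - i) * (if i = 1 then ln a else - 1 / (real (i - 1) * a ^ (i - 1)))) + Pp c p a - Pp c p e) (at_right 0)"
  proof -
    have "eventually (\<lambda>e. 0 < e \<and> e < a) (at_right 0)"
      by (rule eventually_at_rightI[of 0 a]) (use assms in auto)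
    then show ?thesis
    proof eventually_elim
      case (elim e)
      then have "integral {e..a} (\<lambda>x. g x / x ^ p) = (\<Sum>i=1..p. c (p - i) * Ival a e i) + (Pp c p a - Pp c p e)"
        by (intro integral_eps) auto
      moreover have "(\<Sum>i=1..p. c (p - i) * Ival a e i) - K e =
          (\<Sum>i=1..p. c (p - i) * (if i = 1 then ln a else - 1 / (real (i - 1) * a ^ (i - 1))))"
        unfolding K_def sum_subtractf[symmetric] by (intro sum.cong) (auto simp: Ival_def algebra_simps)
      ultimately show ?case by simp
    qed
  qed
  have "((\<lambda>e. (\<Sum>i=1..p. c (p - i) * (if i = 1 then ln a else - 1 / (real (i - 1) * a ^ (i - 1)))) + Pp c p a - Pp c p e)
     \<longlongrightarrow> (\<Sum>i=1..p. c (p - i) * (if i = 1 then ln a else - 1 / (real (i - 1) * a ^ (i - 1)))) + Pp c p a - 0) (at_right 0)"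
    by (intro tendsto_intros Pp_lim)
  then have lim: "((\<lambda>e. (\<Sum>i=1..p. c (p - i) * (if i = 1 then ln a else - 1 / (real (i - 1) * a ^ (i - 1)))) + Pp c p a - Pp c p e)
     \<longlongrightarrow> FPval c p a) (at_right 0)" unfolding FPval_def by simp
  show "((\<lambda>e. integral {e..a} (\<lambda>x. g x / x ^ p) - K e) \<longlongrightarrow> FPval c p a) (at_right 0)"
    by (subst tendsto_cong[OF ev]) (rule lim)
qed

lemma FP_eq: "0 < a \<Longrightarrow> FP_integral g p a = FPval c p a"
  using FP_has FP_integral_eq by blast

end



context pser begin

definition CC :: "real \<Rightarrow> real" where "CC a = (\<Sum>j. \<bar>c j\<bar> * a ^ j)"

lemma term_le_CC: "0 \<le> a \<Longrightarrow> \<bar>c j\<bar> * a ^ j \<le> CC a"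
  unfolding CC_def using sum_le_suminf[OF abs_summable[of a], of "{j}"] by auto

lemma tail_le_CC: "0 \<le> a \<Longrightarrow> (\<Sum>m. \<bar>c (m + p)\<bar> * a ^ (m + p)) \<le> CC a"
proof -
  assume a: "0 \<le> a"
  have "CC a = (\<Sum>m. \<bar>c (m + p)\<bar> * a ^ (m + p)) + (\<Sum>i<p. \<bar>c i\<bar> * a ^ i)"
    unfolding CC_def using suminf_split_initial_segment[OF abs_summable[OF a], of p] by simp
  moreover have "(\<Sum>i<p. \<bar>c i\<bar> * a ^ i) \<ge> 0" using a by (intro sum_nonneg) auto
  ultimately show ?thesis by linarith
qed

lemma Pp_bound:
  assumes a: "0 < a"
  shows "\<bar>Pp c p a\<bar> \<le> a * CC a / a ^ p"
proof -
  define T where "T = (\<lambda>m. \<bar>c (m + p)\<bar> * a ^ (m + p))"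
  have sT: "summable T"
    unfolding T_def using abs_summable[of a] a summable_iff_shift[of "\<lambda>j. \<bar>c j\<bar> * a ^ j" p] by simp
  have sdd: "summable (\<lambda>m. \<bar>dd c p m * a ^ m\<bar>)"
    using powser_insidea[OF summable_dd[of p "a + 1"], of a] a by simp
  have "\<bar>Pp c p a\<bar> \<le> (\<Sum>m. \<bar>dd c p m * a ^ m\<bar>)" unfolding Pp_def by (rule summable_rabs[OF sdd])
  also have "\<dots> = (\<Sum>m. \<bar>dd c p (Suc m) * a ^ Suc m\<bar>)"
  proof -
    have "dd c p 0 = 0" by (simp add: dd_def)
    then show ?thesis using suminf_split_head[OF sdd] by simp
  qed
  also have "\<dots> \<le> (\<Sum>m. a / a ^ p * T m)"
  proof (rule suminf_le)
    fix m
    have "\<bar>dd c p (Suc m) * a ^ Suc m\<bar> = \<bar>c (m + p)\<bar> * a ^ Suc m / real (Suc m)"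
      using a by (simp add: dd_def abs_mult add.commute)
    also have "\<dots> \<le> \<bar>c (m + p)\<bar> * a ^ Suc m"
      apply (subst pos_divide_le_eq, simp)
      using mult_left_mono[of 1 "real (Suc m)" "\<bar>c (m + p)\<bar> * a ^ Suc m"] a by simp
    also have "\<dots> = a / a ^ p * T m" unfolding T_def using a by (simp add: power_add field_simps)
    finally show "\<bar>dd c p (Suc m) * a ^ Suc m\<bar> \<le> a / a ^ p * T m" .
  next
    show "summable (\<lambda>m. \<bar>dd c p (Suc m) * a ^ Suc m\<bar>)"
      by (subst summable_Suc_iff[where f="\<lambda>m. \<bar>dd c p m * a ^ m\<bar>"]) (rule sdd)
    show "summable (\<lambda>m. a / a ^ p * T m)" by (intro summable_mult sT)
  qed
  also have "\<dots> = a / a ^ p * (\<Sum>m. T m)" by (rule suminf_mult[OF sT])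
  also have "\<dots> \<le> a / a ^ p * CC a"
  proof -
    have "(\<Sum>m. T m) \<le> CC a" using tail_le_CC[of a p] a by (simp add: T_def)
    then show ?thesis by (rule mult_left_mono) (use a in simp)
  qed
  also have "a / a ^ p * CC a = a * CC a / a ^ p" by simp
  finally show ?thesis .
qed

lemma S1_bound:
  assumes a: "0 < a"
  shows "\<bar>\<Sum>i=1..Suc q. c (Suc q - i) * (if i = 1 then ln a else - 1 / (real (i - 1) * a ^ (i - 1)))\<bar>
         \<le> \<bar>c q\<bar> * \<bar>ln a\<bar> + real (Suc q) * (CC a / a ^ q)"
proof -
  have "\<bar>\<Sum>i=1..Suc q. c (Suc q - i) * (if i = 1 then ln a else - 1 / (real (i - 1) * a ^ (i - 1)))\<bar>
      \<le> (\<Sum>i=1..Suc q. \<bar>c (Suc q - i) * (if i = 1 then ln a else - 1 / (real (i - 1) * a ^ (i - 1)))\<bar>)"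
    by (rule sum_abs)
  also have "\<dots> \<le> (\<Sum>i=1..Suc q. (if i = 1 then \<bar>c q\<bar> * \<bar>ln a\<bar> else 0) + CC a / a ^ q)"
  proof (rule sum_mono)
    fix i assume i: "i \<in> {1..Suc q}"
    have base: "\<bar>c (Suc q - i)\<bar> / a ^ (i - 1) \<le> CC a / a ^ q"
    proof -
      have "a ^ q = a ^ (i - 1) * a ^ (Suc q - i)" using i by (simp add: power_add[symmetric])
      then have "\<bar>c (Suc q - i)\<bar> / a ^ (i - 1) = \<bar>c (Suc q - i)\<bar> * a ^ (Suc q - i) / a ^ q"
        using a by (simp add: field_simps)
      also have "\<dots> \<le> CC a / a ^ q" using term_le_CC[of a "Suc q - i"] a by (simp add: divide_right_mono)
      finally show ?thesis .
    qed
    show "\<bar>c (Suc q - i) * (if i = 1 then ln a else - 1 / (real (i - 1) * a ^ (i - 1)))\<bar>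
        \<le> (if i = 1 then \<bar>c q\<bar> * \<bar>ln a\<bar> else 0) + CC a / a ^ q"
    proof (cases "i = 1")
      case True
      have "0 \<le> CC a / a ^ q" using term_le_CC[of a 0] a by simp
      then show ?thesis using True by (simp add: abs_mult)
    next
      case False
      then have "i \<ge> 2" using i by auto
      have "\<bar>c (Suc q - i) * (- 1 / (real (i - 1) * a ^ (i - 1)))\<bar> = \<bar>c (Suc q - i)\<bar> / a ^ (i - 1) / real (i - 1)"
        using a by (simp add: abs_mult)
      also have "\<dots> \<le> \<bar>c (Suc q - i)\<bar> / a ^ (i - 1)"
        apply (subst pos_divide_le_eq) using \<open>i \<ge> 2\<close> apply simp
        using mult_left_mono[of 1 "real (i - 1)" "\<bar>c (Suc q - i)\<bar> / a ^ (i - 1)"] a \<open>i \<ge> 2\<close> by simp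
      finally show ?thesis using base False by simp
    qed
  qed
  also have "\<dots> = \<bar>c q\<bar> * \<bar>ln a\<bar> + real (Suc q) * (CC a / a ^ q)"
    by (simp add: sum.distrib)
  finally show ?thesis .
qed

lemma FPval_lim:
  assumes w: "0 < \<omega>" "\<omega> < a"
  shows "(\<lambda>p. \<omega> ^ p * FPval c p a) \<longlonglongrightarrow> 0"
proof -
  have a: "0 < a" using w by simp
  define b where "b = \<omega> / a"
  have b: "0 < b" "b < 1" using w unfolding b_def by auto
  define B where "B = (\<lambda>q. \<omega> * \<bar>ln a\<bar> * (\<bar>c q\<bar> * \<omega> ^ q) + a * CC a * (real (Suc q) * b ^ Suc q) + a * CC a * b ^ Suc q)"
  have "(\<lambda>q. \<omega> ^ Suc q * FPval c (Suc q) a) \<longlonglongrightarrow> 0"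
  proof (rule Lim_null_comparison)
    show "\<forall>\<^sub>F q in sequentially. norm (\<omega> ^ Suc q * FPval c (Suc q) a) \<le> B q"
    proof (rule always_eventually, rule allI)
      fix q
      have "norm (\<omega> ^ Suc q * FPval c (Suc q) a) \<le> \<omega> ^ Suc q * (\<bar>c q\<bar> * \<bar>ln a\<bar> + real (Suc q) * (CC a / a ^ q) + a * CC a / a ^ Suc q)"
      proof -
        have "\<bar>FPval c (Suc q) a\<bar> \<le> \<bar>c q\<bar> * \<bar>ln a\<bar> + real (Suc q) * (CC a / a ^ q) + a * CC a / a ^ Suc q"
          unfolding FPval_def using S1_bound[OF a, of q] Pp_bound[OF a, of "Suc q"]
          by (intro order.trans[OF abs_triangle_ineq]) linarith
        moreover have "norm (\<omega> ^ Suc q * FPval c (Suc q) a) = \<omega> ^ Suc q * \<bar>FPval c (Suc q) a\<bar>"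
          using w by (simp add: abs_mult)
        ultimately show ?thesis using w by (simp add: mult_left_mono)
      qed
      also have "\<dots> = B q" unfolding B_def b_def using a by (simp add: field_simps power_divide)
      finally show "norm (\<omega> ^ Suc q * FPval c (Suc q) a) \<le> B q" .
    qed
    have l1: "(\<lambda>q. \<bar>c q\<bar> * \<omega> ^ q) \<longlonglongrightarrow> 0"
      by (rule summable_LIMSEQ_zero[OF abs_summable]) (use w in simp)
    have l2: "(\<lambda>q. real (Suc q) * b ^ Suc q) \<longlonglongrightarrow> 0"
      using powser_times_n_limit_0[of b] b LIMSEQ_Suc[of "\<lambda>n. real n * b ^ n" 0] by simp
    have l3: "(\<lambda>q. b ^ Suc q) \<longlonglongrightarrow> 0"
      using LIMSEQ_power_zero[of b] b LIMSEQ_Suc[of "\<lambda>n. b ^ n" 0] by simp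
    show "B \<longlonglongrightarrow> 0" unfolding B_def
      using tendsto_add[OF tendsto_add[OF tendsto_mult[OF tendsto_const l1] tendsto_mult[OF tendsto_const l2]] tendsto_mult[OF tendsto_const l3]]
      by simp
  qed
  from LIMSEQ_imp_Suc[where f="\<lambda>p. \<omega> ^ p * FPval c p a", OF this] show ?thesis .
qed

end



lemma re_deriv:
  assumes "G holomorphic_on UNIV"
  shows "((\<lambda>x. Re (G (complex_of_real x))) has_real_derivative Re (deriv G (complex_of_real x))) (at x)"
proof -
  have "(G has_field_derivative deriv G (complex_of_real x)) (at (complex_of_real x))"
    using holomorphic_derivI[OF assms open_UNIV UNIV_I] by simp
  then have "((\<lambda>x. G (complex_of_real x)) has_vector_derivative deriv G (complex_of_real x)) (at x)"
    using has_vector_derivative_real_field[of G _ x UNIV] by simp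
  then show ?thesis by (rule has_field_derivative_Re)
qed

lemma higher_deriv_re:
  assumes "F holomorphic_on UNIV"
  shows "(deriv ^^ k) (\<lambda>x. Re (F (complex_of_real x))) = (\<lambda>x. Re ((deriv ^^ k) F (complex_of_real x)))"
proof (induction k)
  case 0 then show ?case by simp
next
  case (Suc k)
  have hol: "(deriv ^^ k) F holomorphic_on UNIV" by (rule holomorphic_higher_deriv[OF assms open_UNIV])
  have "(deriv ^^ Suc k) (\<lambda>x. Re (F (complex_of_real x))) = deriv (\<lambda>x. Re ((deriv ^^ k) F (complex_of_real x)))"
    using Suc by simp
  also have "\<dots> = (\<lambda>x. Re (deriv ((deriv ^^ k) F) (complex_of_real x)))"
    using re_deriv[OF hol] DERIV_imp_deriv by (auto simp: fun_eq_iff)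
  also have "\<dots> = (\<lambda>x. Re ((deriv ^^ Suc k) F (complex_of_real x)))" by simp
  finally show ?case .
qed

lemma entire_pser:
  assumes "G holomorphic_on UNIV"
  shows "pser (\<lambda>j. Re ((deriv ^^ j) G 0 / fact j)) (\<lambda>x. Re (G (complex_of_real x)))"
proof
  fix x :: real
  have S: "(\<lambda>n. (deriv ^^ n) G 0 / fact n * (complex_of_real x - 0) ^ n) sums G (complex_of_real x)"
    by (rule holomorphic_power_series[where r="\<bar>x\<bar> + 1"]) (use assms in \<open>auto intro: holomorphic_on_subset\<close>)
  have E: "(deriv ^^ n) G 0 / fact n * (complex_of_real x - 0) ^ n = complex_of_real (x ^ n) * ((deriv ^^ n) G 0 / fact n)" for n
    by (simp add: mult.commute)
  from S[unfolded E] have S2: "(\<lambda>n. complex_of_real (x ^ n) * ((deriv ^^ n) G 0 / fact n)) sums G (complex_of_real x)" .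
  have E2: "Re (complex_of_real (x ^ n) * ((deriv ^^ n) G 0 / fact n)) = Re ((deriv ^^ n) G 0 / fact n) * x ^ n" for n
    by (simp only: scaleR_conv_of_real[symmetric]) (simp add: mult.commute)
  from sums_Re[OF S2, unfolded E2] show "(\<lambda>j. Re ((deriv ^^ j) G 0 / fact j) * x ^ j) sums Re (G (complex_of_real x))" .
qed

lemma FP_comb3:
  assumes h1: "has_FP g1 p1 a L1" and h2: "has_FP g2 p2 a L2" and h3: "has_FP g3 p3 a L3"
    and c1: "continuous_on UNIV g1" and c2: "continuous_on UNIV g2" and c3: "continuous_on UNIV g3"
    and eq: "\<And>x. 0 < x \<Longrightarrow> h x / x ^ p = \<alpha> * (g1 x / x ^ p1) + \<beta> * (g2 x / x ^ p2) + \<gamma> * (g3 x / x ^ p3)"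
    and a: "0 < a"
  shows "has_FP h p a (\<alpha> * L1 + \<beta> * L2 + \<gamma> * L3)"
proof -
  obtain K1 where K1: "divf K1" "((\<lambda>\<epsilon>. integral {\<epsilon>..a} (\<lambda>x. g1 x / x ^ p1) - K1 \<epsilon>) \<longlongrightarrow> L1) (at_right 0)"
    using h1 unfolding has_FP_divf by blast
  obtain K2 where K2: "divf K2" "((\<lambda>\<epsilon>. integral {\<epsilon>..a} (\<lambda>x. g2 x / x ^ p2) - K2 \<epsilon>) \<longlongrightarrow> L2) (at_right 0)"
    using h2 unfolding has_FP_divf by blast
  obtain K3 where K3: "divf K3" "((\<lambda>\<epsilon>. integral {\<epsilon>..a} (\<lambda>x. g3 x / x ^ p3) - K3 \<epsilon>) \<longlongrightarrow> L3) (at_right 0)"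
    using h3 unfolding has_FP_divf by blast
  define K where "K = (\<lambda>\<epsilon>. \<alpha> * K1 \<epsilon> + \<beta> * K2 \<epsilon> + \<gamma> * K3 \<epsilon>)"
  have dK: "divf K" unfolding K_def by (intro divf_add divf_scale K1(1) K2(1) K3(1))
  have int: "(\<lambda>x. g x / x ^ q) integrable_on {e..a}" if "0 < e" "continuous_on UNIV g" for g q e
  proof (rule integrable_continuous_interval)
    show "continuous_on {e..a} (\<lambda>x. g x / x ^ q)"
      using that by (intro continuous_intros) (auto intro: continuous_on_subset)
  qed
  have ev: "eventually (\<lambda>e. integral {e..a} (\<lambda>x. h x / x ^ p) - K e =
      \<alpha> * (integral {e..a} (\<lambda>x. g1 x / x ^ p1) - K1 e) + \<beta> * (integral {e..a} (\<lambda>x. g2 x / x ^ p2) - K2 e)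
      + \<gamma> * (integral {e..a} (\<lambda>x. g3 x / x ^ p3) - K3 e)) (at_right 0)"
  proof -
    have "eventually (\<lambda>e::real. 0 < e) (at_right 0)" by (rule eventually_at_right_less)
    then show ?thesis
    proof eventually_elim
      case (elim e)
      have "integral {e..a} (\<lambda>x. h x / x ^ p) = integral {e..a} (\<lambda>x. \<alpha> * (g1 x / x ^ p1) + \<beta> * (g2 x / x ^ p2) + \<gamma> * (g3 x / x ^ p3))"
        using elim by (intro integral_cong eq) auto
      also have "\<dots> = \<alpha> * integral {e..a} (\<lambda>x. g1 x / x ^ p1) + \<beta> * integral {e..a} (\<lambda>x. g2 x / x ^ p2) + \<gamma> * integral {e..a} (\<lambda>x. g3 x / x ^ p3)"
        by (intro integral_unique has_integral_add has_integral_mult_right integrable_integral int[OF elim c1] int[OF elim c2] int[OF elim c3])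
      finally show ?case unfolding K_def by (simp add: algebra_simps)
    qed
  qed
  have "((\<lambda>e. \<alpha> * (integral {e..a} (\<lambda>x. g1 x / x ^ p1) - K1 e) + \<beta> * (integral {e..a} (\<lambda>x. g2 x / x ^ p2) - K2 e)
      + \<gamma> * (integral {e..a} (\<lambda>x. g3 x / x ^ p3) - K3 e)) \<longlongrightarrow> \<alpha> * L1 + \<beta> * L2 + \<gamma> * L3) (at_right 0)"
    by (intro tendsto_intros K1(2) K2(2) K3(2))
  then have "((\<lambda>e. integral {e..a} (\<lambda>x. h x / x ^ p) - K e) \<longlongrightarrow> \<alpha> * L1 + \<beta> * L2 + \<gamma> * L3) (at_right 0)"
    by (subst tendsto_cong[OF ev])
  then show ?thesis unfolding has_FP_divf using dK by blast
qed




definition one_c :: "nat \<Rightarrow> real" where "one_c j = (if j = 0 then 1 else 0)"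

lemma pser_one: "pser one_c (\<lambda>_. 1)"
proof
  fix x :: real
  have "(\<lambda>j. one_c j * x ^ j) = (\<lambda>j. if j = 0 then (\<lambda>_. 1::real) j else 0)" by (auto simp: one_c_def fun_eq_iff)
  then show "(\<lambda>j. one_c j * x ^ j) sums 1" using sums_single[of 0 "\<lambda>_. 1::real"] by simp
qed

lemma FPval_one: "FPval one_c (Suc k) a = (if k = 0 then ln a else - 1 / (real k * a ^ k))"
proof -
  have "(\<Sum>i=1..Suc k. one_c (Suc k - i) * (if i = 1 then ln a else - 1 / (real (i - 1) * a ^ (i - 1))))
     = (\<Sum>i=1..Suc k. if i = Suc k then (if i = 1 then ln a else - 1 / (real (i - 1) * a ^ (i - 1))) else 0)"
    by (intro sum.cong) (auto simp: one_c_def)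
  also have "\<dots> = (if k = 0 then ln a else - 1 / (real k * a ^ k))" by simp
  finally have s: "(\<Sum>i=1..Suc k. one_c (Suc k - i) * (if i = 1 then ln a else - 1 / (real (i - 1) * a ^ (i - 1))))
     = (if k = 0 then ln a else - 1 / (real k * a ^ k))" .
  have "(\<lambda>m. dd one_c (Suc k) m * a ^ m) = (\<lambda>_. 0)" by (auto simp: dd_def one_c_def fun_eq_iff)
  then have "Pp one_c (Suc k) a = 0" unfolding Pp_def by simp
  then show ?thesis unfolding FPval_def s by simp
qed

lemma V1_sums:
  assumes w: "0 < \<omega>" "\<omega> < a"
  shows "(\<lambda>k. (- \<omega>) ^ k * FPval one_c (Suc k) a) sums (ln a + ln (1 + \<omega> / a))"
proof -
  have "\<bar>\<omega> / a\<bar> < 1" using w by auto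
  from ln_series'[OF this] have l: "(\<lambda>n. - ((- (\<omega> / a)) ^ n) / of_nat n) sums ln (1 + \<omega> / a)" .
  have "(\<lambda>k. (if k = 0 then (\<lambda>_. ln a) k else 0) + - ((- (\<omega> / a)) ^ k) / of_nat k) sums (ln a + ln (1 + \<omega> / a))"
    by (rule sums_add[OF sums_single l])
  moreover have "(if k = 0 then (\<lambda>_. ln a) k else 0) + - ((- (\<omega> / a)) ^ k) / of_nat k = (- \<omega>) ^ k * FPval one_c (Suc k) a" for k
  proof (cases "k = 0")
    case True then show ?thesis by (simp add: FPval_one)
  next
    case False
    have "(- (\<omega> / a)) ^ k = (- \<omega>) ^ k / a ^ k" by (simp add: power_divide[symmetric])
    moreover have "- ((- \<omega>) ^ k / a ^ k) / real k = (- \<omega>) ^ k * (- 1 / (real k * a ^ k))"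
      using w False by (simp add: field_simps)
    ultimately show ?thesis using False by (simp add: FPval_one)
  qed
  ultimately show ?thesis by simp
qed

lemma gchoose_m1: "((- real 1) gchoose k) = (-1) ^ k"
proof -
  have "((- real 1) gchoose k) = (-1) ^ k * ((real 1 + real k - 1) gchoose k)" by (rule gbinomial_minus)
  also have "(real 1 + real k - 1) gchoose k = real k gchoose k" by simp
  also have "\<dots> = real (k choose k)" using binomial_gbinomial[of k k] by simp
  finally show ?thesis by simp
qed

lemma telescope2:
  "(\<Sum>k<n. (- w) ^ k * (B k + w * B (Suc k))) = B 0 - (- w) ^ n * B n" for w :: real
  by (induction n) (auto simp: algebra_simps)

lemma base_case:
  fixes f :: "real \<Rightarrow> real" and F :: "complex \<Rightarrow> complex"
  assumes entire: "F holomorphic_on UNIV"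
    and ext: "\<And>x::real. F (complex_of_real x) = complex_of_real (f x)"
    and w: "0 < \<omega>" "\<omega> < a"
  shows "(\<lambda>k. ((- real 1) gchoose k) * \<omega> ^ k * FP_integral f (k + 1) a)
           sums (integral {0..a} (\<lambda>x. f x / (\<omega> + x) ^ 1) - Delta_sc f 1 \<omega>)"
proof -
  have a: "0 < a" using w by simp
  have fRe: "f = (\<lambda>x. Re (F (complex_of_real x)))" using ext by (auto simp: fun_eq_iff)
  define Q where "Q = (\<lambda>z. if z = - complex_of_real \<omega> then deriv F (- complex_of_real \<omega>)
                else (F z - F (- complex_of_real \<omega>)) / (z - (- complex_of_real \<omega>)))"
  have Qhol: "Q holomorphic_on UNIV" unfolding Q_def by (rule pole_lemma[OF entire]) simp
  define q where "q = (\<lambda>x. Re (Q (complex_of_real x)))"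
  interpret Pq: pser "\<lambda>j. Re ((deriv ^^ j) Q 0 / fact j)" q
    unfolding q_def by (rule entire_pser[OF Qhol])
  interpret Pf: pser "\<lambda>j. Re ((deriv ^^ j) F 0 / fact j)" f
    unfolding fRe by (rule entire_pser[OF entire])
  interpret P1: pser one_c "\<lambda>_. 1" by (rule pser_one)
  define cq where "cq = (\<lambda>j. Re ((deriv ^^ j) Q 0 / fact j))"
  have decomp: "f x = f (- \<omega>) + (x + \<omega>) * q x" for x
  proof (cases "x = - \<omega>")
    case True then show ?thesis by simp
  next
    case False
    then have ne: "complex_of_real x \<noteq> - complex_of_real \<omega>"
      by (metis of_real_eq_iff of_real_minus)
    have "F (- complex_of_real \<omega>) = complex_of_real (f (- \<omega>))" using ext[of "- \<omega>"] by simp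
    then have "Q (complex_of_real x) = complex_of_real ((f x - f (- \<omega>)) / (x + \<omega>))"
      unfolding Q_def using ne ext[of x] by simp
    then have "q x = (f x - f (- \<omega>)) / (x + \<omega>)" unfolding q_def by simp
    moreover have "x + \<omega> \<noteq> 0" using False by linarith
    ultimately show ?thesis by (simp add: field_simps)
  qed
  define V1 where "V1 = (\<lambda>k. FPval one_c (Suc k) a)"
  define Vq where "Vq = (\<lambda>k. FPval cq k a)"
  have FPf: "FP_integral f (k + 1) a = f (- \<omega>) * V1 k + (1 * Vq k + \<omega> * Vq (Suc k))" for k
  proof -
    have "has_FP f (Suc k) a (f (- \<omega>) * V1 k + 1 * Vq k + \<omega> * Vq (Suc k))"
      unfolding V1_def Vq_def cq_def
    proof (rule FP_comb3[OF P1.FP_has[OF a] Pq.FP_has[OF a] Pq.FP_has[OF a] P1.g_cont Pq.g_cont Pq.g_cont _ a])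
      fix x :: real assume "0 < x"
      then show "f x / x ^ Suc k = f (- \<omega>) * (1 / x ^ Suc k) + 1 * (q x / x ^ k) + \<omega> * (q x / x ^ Suc k)"
        by (subst decomp) (simp add: field_simps)
    qed
    then show ?thesis using FP_integral_eq by (simp add: algebra_simps)
  qed
  have Vq_lim: "(\<lambda>n. (- \<omega>) ^ n * Vq n) \<longlonglongrightarrow> 0"
  proof -
    have "(\<lambda>n. \<omega> ^ n * Vq n) \<longlonglongrightarrow> 0" unfolding Vq_def cq_def by (rule Pq.FPval_lim[OF w])
    then have "(\<lambda>n. norm (\<omega> ^ n * Vq n)) \<longlonglongrightarrow> 0" by (rule tendsto_norm_zero)
    moreover have "norm (\<omega> ^ n * Vq n) = norm ((- \<omega>) ^ n * Vq n)" for n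
      by (simp add: abs_mult power_abs)
    ultimately have "(\<lambda>n. norm ((- \<omega>) ^ n * Vq n)) \<longlonglongrightarrow> 0" by simp
    then show ?thesis by (rule tendsto_norm_zero_cancel)
  qed
  have Vq0: "Vq 0 = integral {0..a} q"
    unfolding Vq_def FPval_def cq_def using Pq.integral_0a a by simp
  have int1: "integral {0..a} (\<lambda>x. 1 / (\<omega> + x)) = ln (\<omega> + a) - ln \<omega>"
  proof -
    have "((\<lambda>x. 1 / (\<omega> + x)) has_integral (ln (\<omega> + a) - ln (\<omega> + 0))) {0..a}"
    proof (rule fundamental_theorem_of_calculus)
      fix x assume "x \<in> {0..a}"
      then have "\<omega> + x > 0" using w by auto
      then have "((\<lambda>x. ln (\<omega> + x)) has_real_derivative 1 / (\<omega> + x)) (at x)"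
        by (auto intro!: derivative_eq_intros)
      then show "((\<lambda>x. ln (\<omega> + x)) has_vector_derivative 1 / (\<omega> + x)) (at x within {0..a})"
        by (simp add: has_real_derivative_iff_has_vector_derivative has_vector_derivative_at_within)
    qed (use a in auto)
    from integral_unique[OF this] show ?thesis by simp
  qed
  have intf: "integral {0..a} (\<lambda>x. f x / (\<omega> + x) ^ 1) = f (- \<omega>) * (ln (\<omega> + a) - ln \<omega>) + integral {0..a} q"
  proof -
    have "integral {0..a} (\<lambda>x. f x / (\<omega> + x) ^ 1) = integral {0..a} (\<lambda>x. f (- \<omega>) * (1 / (\<omega> + x)) + q x)"
    proof (rule integral_cong)
      fix x assume "x \<in> {0..a}"
      then have "\<omega> + x \<noteq> 0" using w by auto
      then show "f x / (\<omega> + x) ^ 1 = f (- \<omega>) * (1 / (\<omega> + x)) + q x"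
        by (subst decomp) (simp add: field_simps)
    qed
    also have "\<dots> = f (- \<omega>) * integral {0..a} (\<lambda>x. 1 / (\<omega> + x)) + integral {0..a} q"
    proof (intro integral_unique has_integral_add has_integral_mult_right integrable_integral)
      show "(\<lambda>x. 1 / (\<omega> + x)) integrable_on {0..a}"
        using w by (intro integrable_continuous_interval continuous_intros) auto
      show "q integrable_on {0..a}" by (intro integrable_continuous_interval Pq.g_cont)
    qed
    finally show ?thesis unfolding int1 .
  qed
  have partial: "(\<Sum>k<n. ((- real 1) gchoose k) * \<omega> ^ k * FP_integral f (k + 1) a)
      = f (- \<omega>) * (\<Sum>k<n. (- \<omega>) ^ k * V1 k) + (Vq 0 - (- \<omega>) ^ n * Vq n)" for n
  proof -
    have "(\<Sum>k<n. ((- real 1) gchoose k) * \<omega> ^ k * FP_integral f (k + 1) a)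
        = (\<Sum>k<n. f (- \<omega>) * ((- \<omega>) ^ k * V1 k) + (- \<omega>) ^ k * (Vq k + \<omega> * Vq (Suc k)))"
      unfolding gchoose_m1 FPf by (intro sum.cong refl) (simp add: power_minus[of \<omega>] algebra_simps)
    also have "\<dots> = f (- \<omega>) * (\<Sum>k<n. (- \<omega>) ^ k * V1 k) + (\<Sum>k<n. (- \<omega>) ^ k * (Vq k + \<omega> * Vq (Suc k)))"
      by (simp add: sum.distrib sum_distrib_left)
    also have "(\<Sum>k<n. (- \<omega>) ^ k * (Vq k + \<omega> * Vq (Suc k))) = Vq 0 - (- \<omega>) ^ n * Vq n"
      by (rule telescope2)
    finally show ?thesis .
  qed
  have "(\<lambda>n. \<Sum>k<n. (- \<omega>) ^ k * V1 k) \<longlonglongrightarrow> ln a + ln (1 + \<omega> / a)"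
    using V1_sums[OF w] unfolding V1_def sums_def .
  then have "(\<lambda>n. f (- \<omega>) * (\<Sum>k<n. (- \<omega>) ^ k * V1 k) + (Vq 0 - (- \<omega>) ^ n * Vq n))
      \<longlonglongrightarrow> f (- \<omega>) * (ln a + ln (1 + \<omega> / a)) + (Vq 0 - 0)"
    by (intro tendsto_intros Vq_lim)
  moreover have "ln a + ln (1 + \<omega> / a) = ln (\<omega> + a)"
  proof -
    have "0 < 1 + \<omega> / a" using w by (simp add: add_pos_pos)
    then have "ln a + ln (1 + \<omega> / a) = ln (a * (1 + \<omega> / a))" using a by (simp add: ln_mult)
    also have "a * (1 + \<omega> / a) = \<omega> + a" using w by (simp add: field_simps)
    finally show ?thesis .
  qed
  ultimately have "(\<lambda>n. \<Sum>k<n. ((- real 1) gchoose k) * \<omega> ^ k * FP_integral f (k + 1) a)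
      \<longlonglongrightarrow> f (- \<omega>) * ln (\<omega> + a) + integral {0..a} q"
    unfolding partial Vq0 by simp
  moreover have "integral {0..a} (\<lambda>x. f x / (\<omega> + x) ^ 1) - Delta_sc f 1 \<omega> = f (- \<omega>) * ln (\<omega> + a) + integral {0..a} q"
    unfolding intf Delta_sc_def by (simp add: algebra_simps)
  ultimately show ?thesis unfolding sums_def by simp
qed




definition Dl :: "(nat \<Rightarrow> real \<Rightarrow> real) \<Rightarrow> nat \<Rightarrow> real \<Rightarrow> real" where
  "Dl D m w = - (1 / fact m) * D m (- w) * ln w + (\<Sum>k<m. D k (- w) / (fact k * real (m - k) * w ^ (m - k)))"

lemma Delta_Dl: "Delta_sc f (Suc m) w = Dl (\<lambda>k. (deriv ^^ k) f) m w"
proof (cases m)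
  case 0 then show ?thesis by (simp add: Delta_sc_def Dl_def)
next
  case (Suc m')
  have "{0..Suc m - 2} = {..<m}" using Suc by auto
  then show ?thesis using Suc unfolding Delta_sc_def Dl_def by (simp add: algebra_simps)
qed

lemma aux_split: "r > 0 \<Longrightarrow> W > 0 \<Longrightarrow> F > 0 \<Longrightarrow> (r + kk) * (d / (F * r * W)) = d / (F * W) + kk * d / (F * r * W)"
  for r W F kk d :: real by (simp add: field_simps)

lemma dl_alg:
  fixes d :: "nat \<Rightarrow> real" and w :: real
  assumes w: "0 < w"
  shows "- (d m / (fact m * w)) + (\<Sum>k<m. - d (Suc k) / (fact k * real (m - k) * w ^ (m - k)) - d k / (fact k * w ^ Suc (m - k)))
     = - real (Suc m) * (\<Sum>k<Suc m. d k / (fact k * real (Suc m - k) * w ^ (Suc m - k)))"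
proof -
  define u where "u = (\<lambda>k. d k / (fact k * w ^ (Suc m - k)))"
  define v where "v = (\<lambda>k. real k * d k / (fact k * real (Suc m - k) * w ^ (Suc m - k)))"
  define S where "S = (\<Sum>k<Suc m. d k / (fact k * real (Suc m - k) * w ^ (Suc m - k)))"
  define U where "U = (\<Sum>k<m. d k / (fact k * w ^ Suc (m - k)))"
  define V where "V = (\<Sum>k<m. d (Suc k) / (fact k * real (m - k) * w ^ (m - k)))"
  have "real (Suc m) * S = (\<Sum>k<Suc m. u k + v k)" unfolding S_def
    unfolding sum_distrib_left
  proof (intro sum.cong refl)
    fix k assume "k \<in> {..<Suc m}"
    then have k: "k \<le> m" by simp
    have pos: "real (Suc m - k) > 0" using k by simp
    have e: "real (Suc m) = real (Suc m - k) + real k" using k by simp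
    show "real (Suc m) * (d k / (fact k * real (Suc m - k) * w ^ (Suc m - k))) = u k + v k"
      unfolding u_def v_def e by (rule aux_split) (use pos w in auto)
  qed
  also have "\<dots> = (\<Sum>k<Suc m. u k) + (\<Sum>k<Suc m. v k)" by (rule sum.distrib)
  also have "(\<Sum>k<Suc m. u k) = U + d m / (fact m * w)"
    unfolding u_def U_def by (simp add: Suc_diff_le)
  also have "(\<Sum>k<Suc m. v k) = v 0 + (\<Sum>k<m. v (Suc k))" by (rule sum.lessThan_Suc_shift)
  also have "(\<Sum>k<m. v (Suc k)) = V" unfolding V_def
  proof (intro sum.cong refl)
    fix k assume "k \<in> {..<m}"
    have "v (Suc k) = (real (Suc k) * d (Suc k)) / (real (Suc k) * (fact k * real (m - k) * w ^ (m - k)))"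
      unfolding v_def by (simp add: fact_Suc mult.assoc)
    also have "\<dots> = d (Suc k) / (fact k * real (m - k) * w ^ (m - k))"
      by (rule mult_divide_mult_cancel_left) simp
    finally show "v (Suc k) = d (Suc k) / (fact k * real (m - k) * w ^ (m - k))" .
  qed
  finally have E: "real (Suc m) * S = U + d m / (fact m * w) + (v 0 + V)" .
  have v0: "v 0 = 0" by (simp add: v_def)
  have sm: "(\<Sum>k<m. - d (Suc k) / (fact k * real (m - k) * w ^ (m - k)) - d k / (fact k * w ^ Suc (m - k))) = - V - U"
    unfolding U_def V_def by (simp add: sum_subtractf sum_negf)
  have neg: "- real (Suc m) * S = - (real (Suc m) * S)" by (rule mult_minus_left)
  show ?thesis unfolding sm S_def[symmetric] neg using E v0 by linarith
qed

locale dchain =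
  fixes D :: "nat \<Rightarrow> real \<Rightarrow> real"
  assumes hasD: "\<And>k x. (D k has_real_derivative D (Suc k) x) (at x)"
begin

lemma Dneg: "((\<lambda>w. D k (- w)) has_real_derivative - D (Suc k) (- w)) (at w)"
  using DERIV_chain2[OF hasD[of k "- w"] DERIV_minus[OF DERIV_ident]] by simp

lemma term_deriv:
  assumes w: "0 < w" and C: "C \<noteq> 0"
  shows "((\<lambda>w. D k (- w) / (C * w ^ j)) has_real_derivative
          (- D (Suc k) (- w) / (C * w ^ j) - D k (- w) * real j / (C * w ^ Suc j))) (at w)"
proof -
  have "((\<lambda>w. D k (- w) / (C * w ^ j)) has_real_derivative
        (- D (Suc k) (- w) * (C * w ^ j) - (C * (real j * w ^ (j - Suc 0))) * D k (- w)) / (C * w ^ j) ^ Suc (Suc 0)) (at w)"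
    by (rule DERIV_quotient[OF Dneg DERIV_cmult[OF DERIV_pow]]) (use w C in simp)
  moreover have "(- D (Suc k) (- w) * (C * w ^ j) - (C * (real j * w ^ (j - Suc 0))) * D k (- w)) / (C * w ^ j) ^ Suc (Suc 0)
      = - D (Suc k) (- w) / (C * w ^ j) - D k (- w) * real j / (C * w ^ Suc j)"
  proof (cases j)
    case 0 then show ?thesis using w C by (simp add: field_simps power2_eq_square)
  next
    case (Suc j')
    then show ?thesis using w C by (simp add: field_simps power2_eq_square)
  qed
  ultimately show ?thesis by simp
qed

lemma Dl_deriv:
  assumes w: "0 < w"
  shows "(Dl D m has_real_derivative - real (Suc m) * Dl D (Suc m) w) (at w)"
proof -
  have d1: "((\<lambda>w. - (1 / fact m) * D m (- w) * ln w) has_real_derivative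
      (- (1 / fact m) * - D (Suc m) (- w)) * ln w + (1 / w) * (- (1 / fact m) * D m (- w))) (at w)"
    by (rule DERIV_mult[OF DERIV_cmult[OF Dneg] DERIV_ln_divide[OF w]])
  have d2: "((\<lambda>w. \<Sum>k<m. D k (- w) / (fact k * real (m - k) * w ^ (m - k))) has_real_derivative
      (\<Sum>k<m. - D (Suc k) (- w) / (fact k * real (m - k) * w ^ (m - k)) - D k (- w) * real (m - k) / (fact k * real (m - k) * w ^ Suc (m - k)))) (at w)"
    by (rule DERIV_sum, rule term_deriv[OF w]) auto
  have "(Dl D m has_real_derivative
      ((- (1 / fact m) * - D (Suc m) (- w)) * ln w + (1 / w) * (- (1 / fact m) * D m (- w))) +
      (\<Sum>k<m. - D (Suc k) (- w) / (fact k * real (m - k) * w ^ (m - k)) - D k (- w) * real (m - k) / (fact k * real (m - k) * w ^ Suc (m - k)))) (at w)"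
    unfolding Dl_def[abs_def] by (rule DERIV_add[OF d1 d2])
  moreover have "((- (1 / fact m) * - D (Suc m) (- w)) * ln w + (1 / w) * (- (1 / fact m) * D m (- w))) +
      (\<Sum>k<m. - D (Suc k) (- w) / (fact k * real (m - k) * w ^ (m - k)) - D k (- w) * real (m - k) / (fact k * real (m - k) * w ^ Suc (m - k)))
      = - real (Suc m) * Dl D (Suc m) w"
  proof -
    have s: "(\<Sum>k<m. - D (Suc k) (- w) / (fact k * real (m - k) * w ^ (m - k)) - D k (- w) * real (m - k) / (fact k * real (m - k) * w ^ Suc (m - k)))
        = (\<Sum>k<m. - D (Suc k) (- w) / (fact k * real (m - k) * w ^ (m - k)) - D k (- w) / (fact k * w ^ Suc (m - k)))"
      by (intro sum.cong refl) simp
    have fs: "real (Suc m) * (1 / fact (Suc m)) = 1 / (fact m :: real)" by (simp add: fact_Suc)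
    have "- real (Suc m) * (- (1 / fact (Suc m)) * D (Suc m) (- w) * ln w) = (real (Suc m) * (1 / fact (Suc m))) * D (Suc m) (- w) * ln w"
      by (simp only: mult_minus_left mult_minus_right minus_minus mult.assoc)
    also have "\<dots> = (- (1 / fact m) * - D (Suc m) (- w)) * ln w" unfolding fs by simp
    finally have l: "(- (1 / fact m) * - D (Suc m) (- w)) * ln w = - real (Suc m) * (- (1 / fact (Suc m)) * D (Suc m) (- w) * ln w)" by simp
    have m: "(1 / w) * (- (1 / fact m) * D m (- w)) = - (D m (- w) / (fact m * w))" by simp
    show ?thesis unfolding s l m Dl_def using dl_alg[OF w, of "\<lambda>k. D k (- w)" m] by (simp add: algebra_simps)
  qed
  ultimately show ?thesis by simp
qed

end




lemma quot_alg:
  fixes s y :: real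
  assumes s: "0 < s"
  shows "(0 * s ^ n - (real n * (1 * s ^ (n - Suc 0))) * y) / (s ^ n) ^ Suc (Suc 0) = - real n * y / s ^ Suc n"
proof (cases n)
  case 0 then show ?thesis by simp
next
  case (Suc n')
  have "(s ^ Suc n') ^ Suc (Suc 0) = s ^ (Suc n' * Suc (Suc 0))" by (simp only: power_mult)
  also have "Suc n' * Suc (Suc 0) = n' + Suc (Suc n')" by simp
  also have "s ^ (n' + Suc (Suc n')) = s ^ n' * s ^ Suc (Suc n')" by (rule power_add)
  finally have e: "(s ^ Suc n') ^ Suc (Suc 0) = s ^ n' * s ^ Suc (Suc n')" .
  show ?thesis unfolding Suc e using s by (simp add: field_simps)
qed

lemma int_deriv:
  fixes f :: "real \<Rightarrow> real"
  assumes cont: "continuous_on UNIV f" and w: "0 < \<omega>" and a: "0 \<le> a"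
  shows "((\<lambda>w. integral {0..a} (\<lambda>x. f x / (w + x) ^ n)) has_real_derivative
           - real n * integral {0..a} (\<lambda>x. f x / (\<omega> + x) ^ Suc n)) (at \<omega>)"
proof -
  define U where "U = {0::real<..}"
  have cb: "cbox 0 a = {0..a}" by simp
  have "((\<lambda>w. integral (cbox 0 a) (\<lambda>x. f x / (w + x) ^ n)) has_real_derivative
           integral (cbox 0 a) (\<lambda>x. - real n * f x / (\<omega> + x) ^ Suc n)) (at \<omega> within U)"
  proof (rule leibniz_rule_field_derivative)
    fix w t assume wt: "w \<in> U" "t \<in> cbox 0 a"
    then have pos: "w + t > 0" unfolding U_def by auto
    have "((\<lambda>w. f t / (w + t) ^ n) has_real_derivative
          (0 * (w + t) ^ n - (real n * (1 * (w + t) ^ (n - Suc 0))) * f t) / ((w + t) ^ n) ^ Suc (Suc 0)) (at w within U)"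
    proof -
      have dd: "((\<lambda>x. x + t) has_real_derivative 1) (at w within U)"
        by (auto intro!: derivative_eq_intros)
      show ?thesis by (rule DERIV_quotient[OF DERIV_const DERIV_power[OF dd]]) (use pos in simp)
    qed
    moreover have "(0 * (w + t) ^ n - (real n * (1 * (w + t) ^ (n - Suc 0))) * f t) / ((w + t) ^ n) ^ Suc (Suc 0)
        = - real n * f t / (w + t) ^ Suc n"
      by (rule quot_alg[OF pos])
    ultimately show "((\<lambda>w. f t / (w + t) ^ n) has_real_derivative - real n * f t / (w + t) ^ Suc n) (at w within U)"
      by simp
  next
    fix w assume "w \<in> U"
    then have "w > 0" unfolding U_def by simp
    show "(\<lambda>x. f x / (w + x) ^ n) integrable_on cbox 0 a"
      unfolding cb using \<open>w > 0\<close>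
      by (intro integrable_continuous_interval continuous_intros continuous_on_subset[OF cont]) auto
  next
    have "continuous_on (U \<times> cbox 0 a) (\<lambda>p. - real n * f (snd p) / (fst p + snd p) ^ Suc n)"
    proof -
      have cf: "continuous_on (U \<times> cbox 0 a) (\<lambda>p. f (snd p))"
        by (rule continuous_on_compose2[OF cont continuous_on_snd]) auto
      have nz: "\<forall>p\<in>U \<times> cbox 0 a. (fst p + snd p) ^ Suc n \<noteq> 0"
      proof
        fix p assume "p \<in> U \<times> cbox 0 a"
        then have "fst p > 0" "snd p \<ge> 0" unfolding U_def by (auto simp: mem_box)
        then have "fst p + snd p > 0" by simp
        then show "(fst p + snd p) ^ Suc n \<noteq> 0" by simp
      qed
      show ?thesis by (intro continuous_intros cf) (use nz in auto)
    qed
    then show "continuous_on (U \<times> cbox 0 a) (\<lambda>(w, t). - real n * f t / (w + t) ^ Suc n)"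
      by (simp add: case_prod_beta)
  next
    show "\<omega> \<in> U" "convex U" unfolding U_def using w by (auto simp: convex_real_interval)
  qed
  moreover have "at \<omega> within U = at \<omega>" unfolding U_def using w by (intro at_within_open) auto
  moreover have "integral {0..a} (\<lambda>x. - real n * f x / (\<omega> + x) ^ Suc n) = - real n * integral {0..a} (\<lambda>x. f x / (\<omega> + x) ^ Suc n)"
    using integral_mult_right[where c="- real n" and S="{0..a}" and f="\<lambda>x. f x / (\<omega> + x) ^ Suc n"] by (simp add: mult.assoc)
  ultimately show ?thesis unfolding cb by simp
qed




definition bco :: "(real \<Rightarrow> real) \<Rightarrow> real \<Rightarrow> nat \<Rightarrow> nat \<Rightarrow> real" where
  "bco f a n k = ((- real n) gchoose k) * FP_integral f (k + n) a"

definition Ef :: "(real \<Rightarrow> real) \<Rightarrow> (nat \<Rightarrow> real \<Rightarrow> real) \<Rightarrow> real \<Rightarrow> nat \<Rightarrow> real \<Rightarrow> real" where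
  "Ef f D a n w = integral {0..a} (\<lambda>x. f x / (w + x) ^ n) - Dl D (n - 1) w"

lemma diffs_bco: "diffs (bco f a n) k = - real n * bco f a (Suc n) k"
proof -
  have "diffs (bco f a n) k = (real (Suc k) * ((- real n) gchoose Suc k)) * FP_integral f (Suc k + n) a"
    by (simp add: diffs_def bco_def mult.assoc)
  also have "real (Suc k) * ((- real n) gchoose Suc k) = (- real n) * ((- real n - 1) gchoose k)"
    by (rule gbinomial_absorption)
  also have "- real n - 1 = - real (Suc n)" by simp
  also have "Suc k + n = k + Suc n" by simp
  finally show ?thesis by (simp add: bco_def[abs_def] mult.assoc)
qed

lemma step:
  fixes f :: "real \<Rightarrow> real"
  assumes D: "dchain D" and cont: "continuous_on UNIV f" and a: "0 < a"
    and IH: "\<And>w. 0 < w \<Longrightarrow> w < a \<Longrightarrow> (\<lambda>k. bco f a (Suc m) k * w ^ k) sums Ef f D a (Suc m) w"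
    and w0: "0 < w0" "w0 < a"
  shows "(\<lambda>k. bco f a (Suc (Suc m)) k * w0 ^ k) sums Ef f D a (Suc (Suc m)) w0"
proof -
  define n where "n = Suc m"
  have sm: "summable (\<lambda>k. bco f a n k * x ^ k)" if "norm x < a" for x :: real
  proof -
    define r where "r = (\<bar>x\<bar> + a) / 2"
    have r: "0 < r" "r < a" "norm x < norm r" using that unfolding r_def by auto
    have "summable (\<lambda>k. bco f a n k * r ^ k)" unfolding n_def using IH[OF r(1,2)] by (rule sums_summable)
    from powser_inside[OF this r(3)] show ?thesis .
  qed
  have d1: "((\<lambda>z. \<Sum>k. bco f a n k * z ^ k) has_field_derivative (\<Sum>k. diffs (bco f a n) k * w0 ^ k)) (at w0)"
    by (rule termdiffs_strong'[of a]) (use sm w0 in auto)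
  have d1': "(Ef f D a n has_field_derivative (\<Sum>k. diffs (bco f a n) k * w0 ^ k)) (at w0)"
  proof (rule has_field_derivative_transform_within_open[OF d1, of "{0<..<a}"])
    fix x assume "x \<in> {0<..<a}"
    then show "(\<Sum>k. bco f a n k * x ^ k) = Ef f D a n x" unfolding n_def using IH sums_unique by fastforce
  qed (use w0 in auto)
  have d2: "(Ef f D a n has_field_derivative - real n * Ef f D a (Suc n) w0) (at w0)"
  proof -
    have i: "((\<lambda>w. integral {0..a} (\<lambda>x. f x / (w + x) ^ n)) has_real_derivative
           - real n * integral {0..a} (\<lambda>x. f x / (w0 + x) ^ Suc n)) (at w0)"
      by (rule int_deriv[OF cont w0(1)]) (use a in simp)
    have dl: "(Dl D m has_real_derivative - real (Suc m) * Dl D (Suc m) w0) (at w0)"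
      by (rule dchain.Dl_deriv[OF D w0(1)])
    have "((\<lambda>w. integral {0..a} (\<lambda>x. f x / (w + x) ^ n) - Dl D m w) has_real_derivative
           - real n * integral {0..a} (\<lambda>x. f x / (w0 + x) ^ Suc n) - - real (Suc m) * Dl D (Suc m) w0) (at w0)"
      by (rule DERIV_diff[OF i dl])
    moreover have "- real n * integral {0..a} (\<lambda>x. f x / (w0 + x) ^ Suc n) - - real (Suc m) * Dl D (Suc m) w0
        = - real n * Ef f D a (Suc n) w0"
      unfolding Ef_def n_def by (simp add: algebra_simps)
    moreover have "(\<lambda>w. integral {0..a} (\<lambda>x. f x / (w + x) ^ n) - Dl D m w) = Ef f D a n"
      unfolding Ef_def n_def by (simp add: fun_eq_iff)
    ultimately show ?thesis by simp
  qed
  have eq: "(\<Sum>k. diffs (bco f a n) k * w0 ^ k) = - real n * Ef f D a (Suc n) w0"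
    by (rule DERIV_unique[OF d1' d2])
  have sd: "summable (\<lambda>k. diffs (bco f a n) k * w0 ^ k)"
    by (rule termdiff_converges[of w0 a]) (use sm w0 in auto)
  have "(\<lambda>k. diffs (bco f a n) k * w0 ^ k) sums (- real n * Ef f D a (Suc n) w0)"
    using summable_sums[OF sd] unfolding eq .
  then have "(\<lambda>k. - real n * (bco f a (Suc n) k * w0 ^ k)) sums (- real n * Ef f D a (Suc n) w0)"
    unfolding diffs_bco by (simp add: mult.assoc)
  then have "(\<lambda>k. bco f a (Suc n) k * w0 ^ k) sums Ef f D a (Suc n) w0"
    by (subst (asm) sums_mult_iff) (auto simp: n_def)
  then show ?thesis unfolding n_def .
qed

theorem theorem5:
  fixes f :: "real \<Rightarrow> real" and F :: "complex \<Rightarrow> complex"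
    and a \<omega> :: real and n :: nat
  assumes entire: "F holomorphic_on UNIV"
    and ext: "\<And>x::real. F (complex_of_real x) = complex_of_real (f x)"
    and n: "n \<ge> 1"
    and \<omega>: "0 < \<omega>" "\<omega> < a"
  shows "(\<lambda>k. ((- real n) gchoose k) * \<omega> ^ k * FP_integral f (k + n) a)
           sums (integral {0..a} (\<lambda>x. f x / (\<omega> + x) ^ n) - Delta_sc f n \<omega>)"
proof -
  have a: "0 < a" using \<omega> by simp
  have fRe: "f = (\<lambda>x. Re (F (complex_of_real x)))" using ext by (auto simp: fun_eq_iff)
  interpret Pf: pser "\<lambda>j. Re ((deriv ^^ j) F 0 / fact j)" f
    unfolding fRe by (rule entire_pser[OF entire])
  have cont: "continuous_on UNIV f" by (rule Pf.g_cont)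
  define D where "D = (\<lambda>k. (deriv ^^ k) f)"
  have Dc: "dchain D"
  proof
    fix k x
    have e: "D j = (\<lambda>x. Re ((deriv ^^ j) F (complex_of_real x)))" for j
      unfolding D_def fRe by (rule higher_deriv_re[OF entire])
    have hol: "(deriv ^^ k) F holomorphic_on UNIV" by (rule holomorphic_higher_deriv[OF entire open_UNIV])
    show "(D k has_real_derivative D (Suc k) x) (at x)"
      unfolding e using re_deriv[OF hol, of x] by simp
  qed
  obtain m where m: "n = Suc m" using n by (cases n) auto
  have P: "\<forall>w. 0 < w \<and> w < a \<longrightarrow> (\<lambda>k. bco f a (Suc m) k * w ^ k) sums Ef f D a (Suc m) w" for m
  proof (induction m)
    case 0
    show ?case
    proof (intro allI impI)
      fix w assume w: "0 < w \<and> w < a"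
      have "(\<lambda>k. ((- real 1) gchoose k) * w ^ k * FP_integral f (k + 1) a)
           sums (integral {0..a} (\<lambda>x. f x / (w + x) ^ 1) - Delta_sc f 1 w)"
        using base_case[OF entire ext] w by auto
      moreover have "Delta_sc f 1 w = Dl D 0 w" unfolding D_def using Delta_Dl[of f 0 w] by simp
      ultimately show "(\<lambda>k. bco f a (Suc 0) k * w ^ k) sums Ef f D a (Suc 0) w"
        unfolding bco_def Ef_def by (simp add: mult_ac)
    qed
  next
    case (Suc m)
    show ?case
    proof (intro allI impI)
      fix w assume w: "0 < w \<and> w < a"
      show "(\<lambda>k. bco f a (Suc (Suc m)) k * w ^ k) sums Ef f D a (Suc (Suc m)) w"
        by (rule step[OF Dc cont a]) (use Suc.IH w in auto)
    qed
  qed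
  have "(\<lambda>k. bco f a (Suc m) k * \<omega> ^ k) sums Ef f D a (Suc m) \<omega>" using P \<omega> by blast
  moreover have "Delta_sc f (Suc m) \<omega> = Dl D m \<omega>" unfolding D_def by (rule Delta_Dl)
  ultimately show ?thesis unfolding m bco_def Ef_def by (simp add: mult_ac)
qed



end
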